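(* Let $S$ be the three-vertex tree with root $a$, whose right child is $b$, where $b$ has a left child $c$ (preorder $132$), with both edges contiguous. Let $(P,e)$ be any tree pattern. Let $Q$ and $Q'$ be obtained from $S$ by attaching $(P,e)$ via a non-contiguous edge as the right subtree of the leaf $c$, respectively as the right subtree of the middle vertex $b$. Then $Q$ and $Q'$ are Wilf-equivalent.
   Context: $\mathcal{T}_n$ is the set of binary trees on $n$ vertices labeled $1,\dots,n$ by the search tree property (labels of combined trees reassigned by this property). $c_L,c_R,p$: left child, right child, parent. A tree pattern is $(P,e)$, $P\in\mathcal{T}_k$, $e\colon[k]\setminus\{\text{root}\}\to\{0,1\}$; edge $(i,p(i))$ is contiguous if $e(i)=1$, non-contiguous if $e(i)=0$. $T\in\mathcal{T}_n$ contains $(P,e)$ if there is an injection $f\colon[k]\to[n]$ such that for every non-root $i$ of $P$: if $e(i)=1$, $f(i)$ is the left (resp. right) child of $f(p(i))$ when $i$ is the left (resp. right) child of $p(i)$; if $e(i)=0$, $f(i)$ lies in the left (resp. right) subtree of $f(p(i))$. $\mathcal{T}_n(Q)$ is the set of avoiders of $Q$. $Q,Q'$ are Wilf-equivalent if $|\mathcal{T}_n(Q)|=|\mathcal{T}_n(Q')|$ for all $n\ge0$. *)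

theory Defs
  imports "HOL-Library.Tree"
begin

text \<open>Binary trees on n vertices with the search-tree labelling are in bijection with
  unlabelled binary tree shapes of size n (the labelling is forced); we use
  unit tree from HOL-Library.Tree.\<close>

datatype pat = PNode child child
     and child = NoChild | Cont pat | NonCont pat

primrec matches :: "pat \<Rightarrow> unit tree \<Rightarrow> bool"
  and cmatch :: "child \<Rightarrow> unit tree \<Rightarrow> bool" where
  "matches (PNode a b) t = (case t of Leaf \<Rightarrow> False | Node l _ r \<Rightarrow> cmatch a l \<and> cmatch b r)"
| "cmatch NoChild t = True"
| "cmatch (Cont p) t = matches p t"
| "cmatch (NonCont p) t = (\<exists>s\<in>subtrees t. matches p s)"

definition contains :: "unit tree \<Rightarrow> pat \<Rightarrow> bool" where
  "contains t p = (\<exists>s\<in>subtrees t. matches p s)"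

definition avoiders :: "nat \<Rightarrow> pat \<Rightarrow> unit tree set" where
  "avoiders n Q = {t. size t = n \<and> \<not> contains t Q}"

definition wilf_equiv :: "pat \<Rightarrow> pat \<Rightarrow> bool" where
  "wilf_equiv Q Q' = (\<forall>n. card (avoiders n Q) = card (avoiders n Q'))"

end

theory Submission
  imports Defs "HOL-Computational_Algebra.Formal_Power_Series"
begin

definition cnt :: "(unit tree \<Rightarrow> bool) \<Rightarrow> nat \<Rightarrow> nat" where
  "cnt F n = card {t. size t = n \<and> F t}"

lemma finite_le: "finite {t::unit tree. size t \<le> n}"
proof (induction n)
  case 0
  have "{t::unit tree. size t \<le> 0} = {Leaf}" by auto
  then show ?case by simp
next
  case (Suc n)
  have "{t::unit tree. size t \<le> Suc n} \<subseteq> insert Leaf ((\<lambda>(l,r). Node l () r) ` ({t. size t \<le> n} \<times> {t. size t \<le> n}))"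
  proof
    fix t :: "unit tree" assume "t \<in> {t. size t \<le> Suc n}"
    then show "t \<in> insert Leaf ((\<lambda>(l,r). Node l () r) ` ({t. size t \<le> n} \<times> {t. size t \<le> n}))"
      by (cases t) (auto simp: image_iff)
  qed
  then show ?case using Suc finite_subset by blast
qed

lemma finite_sz: "finite {t::unit tree. size t = n \<and> F t}"
  by (rule finite_subset[OF _ finite_le[of n]]) auto

lemma cnt_cong: "(\<And>t. size t = n \<Longrightarrow> F t = G t) \<Longrightarrow> cnt F n = cnt G n"
  unfolding cnt_def by (metis (mono_tags, lifting))

lemma cnt_node:
  "cnt (\<lambda>t. case t of Leaf \<Rightarrow> False | Node l _ r \<Rightarrow> F l \<and> G r) (Suc n)
    = (\<Sum>k\<le>n. cnt F k * cnt G (n-k))"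
proof -
  let ?S = "\<lambda>k. {l. size l = k \<and> F l} \<times> {r. size r = n - k \<and> G r}"
  let ?f = "\<lambda>(l,r). Node l () r"
  have eq: "{t. size t = Suc n \<and> (case t of Leaf \<Rightarrow> False | Node l _ r \<Rightarrow> F l \<and> G r)}
      = (\<Union>k\<in>{..n}. ?f ` ?S k)"
  proof (rule set_eqI)
    fix t :: "unit tree"
    show "t \<in> {t. size t = Suc n \<and> (case t of Leaf \<Rightarrow> False | Node l _ r \<Rightarrow> F l \<and> G r)}
      \<longleftrightarrow> t \<in> (\<Union>k\<in>{..n}. ?f ` ?S k)"
      by (cases t) (auto simp: image_iff)
  qed
  have "card (\<Union>k\<in>{..n}. ?f ` ?S k) = (\<Sum>k\<le>n. card (?f ` ?S k))"
    by (rule card_UN_disjoint) (auto simp: finite_sz)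
  also have "\<dots> = (\<Sum>k\<le>n. card (?S k))"
    by (rule sum.cong[OF refl], rule card_image) (auto simp: inj_on_def)
  also have "\<dots> = (\<Sum>k\<le>n. cnt F k * cnt G (n-k))"
    by (simp add: cnt_def card_cartesian_product)
  finally show ?thesis unfolding cnt_def eq .
qed

lemma conv_fps: "(\<Sum>k\<le>m. f k * g (m-k)) = fps_nth (Abs_fps f * Abs_fps g) m"
  by (simp add: fps_mult_nth atLeast0AtMost)

lemma conv_swap:
  fixes a b d :: "nat \<Rightarrow> nat"
  shows "(\<Sum>k\<le>m. (case k of 0 \<Rightarrow> 0 | Suc j \<Rightarrow> \<Sum>i\<le>j. a i * d (j-i)) * b (m-k))
       = (\<Sum>k\<le>m. (case k of 0 \<Rightarrow> 0 | Suc j \<Rightarrow> \<Sum>i\<le>j. a i * b (j-i)) * d (m-k))"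
proof -
  have z: "Abs_fps (case_nat 0 (fps_nth (Abs_fps a * Abs_fps c))) = fps_X * (Abs_fps a * Abs_fps c)"
    for c :: "nat \<Rightarrow> nat"
    by (rule fps_ext) (auto split: nat.split)
  show ?thesis unfolding conv_fps z by (simp add: mult_ac)
qed

lemma matches_Leaf[simp]: "matches p Leaf = False"
  by (cases p) auto

lemma contains_Leaf[simp]: "contains Leaf p = False"
  by (simp add: contains_def)

lemma contains_Node: "contains (Node l x r) p = (matches p (Node l x r) \<or> contains l p \<or> contains r p)"
  by (auto simp: contains_def)

fun av :: "(unit tree \<Rightarrow> bool) \<Rightarrow> unit tree \<Rightarrow> bool" where
  "av Y Leaf = True"
| "av Y (Node l _ r) = (av Y l \<and> av Y r \<and> \<not> Y r)"

definition Yq :: "pat \<Rightarrow> unit tree \<Rightarrow> bool" where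
  "Yq P r = (case r of Leaf \<Rightarrow> False | Node z _ yr \<Rightarrow>
     (case z of Leaf \<Rightarrow> False | Node zl _ zr \<Rightarrow> contains zr P))"

definition Yq' :: "pat \<Rightarrow> unit tree \<Rightarrow> bool" where
  "Yq' P r = (case r of Leaf \<Rightarrow> False | Node z _ yr \<Rightarrow> z \<noteq> Leaf \<and> contains yr P)"

lemma Yq_C: "Yq P t \<Longrightarrow> contains t P"
  by (auto simp: Yq_def contains_Node split: tree.splits)

lemma Yq'_C: "Yq' P t \<Longrightarrow> contains t P"
  by (auto simp: Yq'_def contains_Node split: tree.splits)

lemma mQ: "matches (PNode NoChild (Cont (PNode (Cont (PNode NoChild (NonCont P))) NoChild))) t
   = (case t of Leaf \<Rightarrow> False | Node l _ r \<Rightarrow> Yq P r)"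
  by (auto simp: Yq_def contains_def split: tree.splits)

lemma mQ': "matches (PNode NoChild (Cont (PNode (Cont (PNode NoChild NoChild)) (NonCont P)))) t
   = (case t of Leaf \<Rightarrow> False | Node l _ r \<Rightarrow> Yq' P r)"
  by (auto simp: Yq'_def contains_def split: tree.splits)

lemma avoid_Q: "(\<not> contains t (PNode NoChild (Cont (PNode (Cont (PNode NoChild (NonCont P))) NoChild))))
   = av (Yq P) t"
  by (induction t) (auto simp del: matches.simps simp add: contains_Node mQ)

lemma avoid_Q': "(\<not> contains t (PNode NoChild (Cont (PNode (Cont (PNode NoChild NoChild)) (NonCont P)))))
   = av (Yq' P) t"
  by (induction t) (auto simp del: matches.simps simp add: contains_Node mQ')

lemma notC_av:
  assumes hY: "\<And>t. Y t \<Longrightarrow> contains t P"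
  shows "\<not> contains t P \<Longrightarrow> av Y t \<and> \<not> Y t"
proof -
  have h: "\<And>t. \<not> contains t P \<Longrightarrow> \<not> Y t" using hY by blast
  show "\<not> contains t P \<Longrightarrow> av Y t \<and> \<not> Y t"
    by (induction t) (auto simp: contains_Node h)
qed

definition "A Y = cnt (av Y)"
definition "B Y = cnt (\<lambda>t. av Y t \<and> \<not> Y t)"
definition "D Y P = cnt (\<lambda>t. av Y t \<and> \<not> Y t \<and> contains t P)"
definition "E Y = cnt (\<lambda>t. av Y t \<and> Y t)"
definition "N P = cnt (\<lambda>t. \<not> contains t P)"

lemma A0: "A Y 0 = 1"
proof -
  have "{t::unit tree. size t = 0 \<and> av Y t} = {Leaf}" by auto
  then show ?thesis by (simp add: A_def cnt_def)
qed

lemma ASuc: "A Y (Suc n) = (\<Sum>k\<le>n. A Y k * B Y (n-k))"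
proof -
  have "A Y (Suc n) = cnt (\<lambda>t. case t of Leaf \<Rightarrow> False | Node l _ r \<Rightarrow> av Y l \<and> (av Y r \<and> \<not> Y r)) (Suc n)"
    unfolding A_def by (rule cnt_cong) (auto split: tree.split)
  then show ?thesis by (simp add: cnt_node A_def B_def)
qed

lemma card_split:
  assumes "\<And>t. F t = (G t \<or> H t)" "\<And>t. \<not> (G t \<and> H t)"
  shows "cnt F n = cnt G n + cnt H n"
proof -
  have "{t. size t = n \<and> F t} = {t. size t = n \<and> G t} \<union> {t. size t = n \<and> H t}"
    using assms by auto
  then show ?thesis unfolding cnt_def
    using assms(2) by (simp add: card_Un_disjoint finite_sz disjoint_iff)
qed

lemma ABE: "A Y n = B Y n + E Y n"
  unfolding A_def B_def E_def by (rule card_split) auto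

lemma BDN:
  assumes hY: "\<And>t. Y t \<Longrightarrow> contains t P"
  shows "B Y n = D Y P n + N P n"
  unfolding B_def D_def N_def by (rule card_split) (use notC_av[OF hY] in auto)

lemma E0:
  assumes hY: "\<And>t. Y t \<Longrightarrow> contains t P"
  shows "E Y 0 = 0"
proof -
  have "{t::unit tree. size t = 0 \<and> av Y t \<and> Y t} = {}" using hY[of Leaf] by auto
  then show ?thesis by (simp add: E_def cnt_def)
qed

definition Zq :: "pat \<Rightarrow> unit tree \<Rightarrow> bool" where
  "Zq P z = (case z of Leaf \<Rightarrow> False | Node zl _ zr \<Rightarrow>
     av (Yq P) zl \<and> (av (Yq P) zr \<and> \<not> Yq P zr \<and> contains zr P))"

lemma Yq_Leaf[simp]: "Yq P Leaf = False" by (simp add: Yq_def)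
lemma Yq'_Leaf[simp]: "Yq' P Leaf = False" by (simp add: Yq'_def)
lemma Yq_Node: "Yq P (Node z x yr) = (case z of Leaf \<Rightarrow> False | Node zl _ zr \<Rightarrow> contains zr P)"
  by (simp add: Yq_def)
lemma Yq'_Node: "Yq' P (Node z x yr) = (z \<noteq> Leaf \<and> contains yr P)"
  by (simp add: Yq'_def)

lemma EZ: "(av (Yq P) (Node z x yr) \<and> Yq P (Node z x yr)) = (Zq P z \<and> (av (Yq P) yr \<and> \<not> Yq P yr))"
  by (cases z) (auto simp: Zq_def Yq_Node)

lemma EZ': "(av (Yq' P) (Node z x yr) \<and> Yq' P (Node z x yr))
   = ((z \<noteq> Leaf \<and> av (Yq' P) z) \<and> (av (Yq' P) yr \<and> \<not> Yq' P yr \<and> contains yr P))"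
  by (auto simp: Yq'_Node)

lemma E_Yq: "E (Yq P) (Suc n) = (\<Sum>k\<le>n. cnt (Zq P) k * B (Yq P) (n-k))"
proof -
  have "E (Yq P) (Suc n) = cnt (\<lambda>t. case t of Leaf \<Rightarrow> False | Node z _ yr \<Rightarrow>
      Zq P z \<and> (av (Yq P) yr \<and> \<not> Yq P yr)) (Suc n)"
    unfolding E_def by (rule cnt_cong, case_tac t) (simp, simp only: EZ tree.case)
  then show ?thesis by (simp add: cnt_node B_def)
qed

lemma Zq_eq: "cnt (Zq P) k = (case k of 0 \<Rightarrow> 0 | Suc j \<Rightarrow> \<Sum>i\<le>j. A (Yq P) i * D (Yq P) P (j-i))"
proof (cases k)
  case 0
  have "{t::unit tree. size t = 0 \<and> Zq P t} = {}" by (auto simp: Zq_def)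
  then show ?thesis using 0 by (simp add: cnt_def)
next
  case (Suc j)
  then show ?thesis unfolding Zq_def by (simp add: cnt_node A_def D_def)
qed

lemma E_Yq': "E (Yq' P) (Suc n) = (\<Sum>k\<le>n. cnt (\<lambda>z. z \<noteq> Leaf \<and> av (Yq' P) z) k * D (Yq' P) P (n-k))"
proof -
  have "E (Yq' P) (Suc n) = cnt (\<lambda>t. case t of Leaf \<Rightarrow> False | Node z _ yr \<Rightarrow>
      (z \<noteq> Leaf \<and> av (Yq' P) z) \<and> (av (Yq' P) yr \<and> \<not> Yq' P yr \<and> contains yr P)) (Suc n)"
    unfolding E_def by (rule cnt_cong, case_tac t) (simp, simp only: EZ' tree.case)
  then show ?thesis by (simp add: cnt_node D_def)
qed

lemma Z'_eq: "cnt (\<lambda>z. z \<noteq> Leaf \<and> av (Yq' P) z) k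
   = (case k of 0 \<Rightarrow> 0 | Suc j \<Rightarrow> \<Sum>i\<le>j. A (Yq' P) i * B (Yq' P) (j-i))"
proof (cases k)
  case 0
  have "{t::unit tree. size t = 0 \<and> t \<noteq> Leaf \<and> av (Yq' P) t} = {}" by auto
  then show ?thesis using 0 by (simp add: cnt_def)
next
  case (Suc j)
  have "cnt (\<lambda>z. z \<noteq> Leaf \<and> av (Yq' P) z) k = A (Yq' P) k"
    unfolding A_def using Suc by (intro cnt_cong) auto
  then show ?thesis using Suc by (simp add: ASuc)
qed

lemma main: "A (Yq P) n = A (Yq' P) n \<and> B (Yq P) n = B (Yq' P) n"
proof (induction n rule: less_induct)
  case (less n)
  show ?case
  proof (cases n)
    case 0
    then show ?thesis using ABE[of "Yq P" 0] ABE[of "Yq' P" 0] E0[OF Yq_C] E0[OF Yq'_C]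
      by (simp add: A0)
  next
    case (Suc m)
    have IA: "\<And>i. i \<le> m \<Longrightarrow> A (Yq' P) i = A (Yq P) i" using less Suc by auto
    have IB: "\<And>i. i \<le> m \<Longrightarrow> B (Yq' P) i = B (Yq P) i" using less Suc by auto
    have ID: "\<And>i. i \<le> m \<Longrightarrow> D (Yq' P) P i = D (Yq P) P i"
      using IB BDN[OF Yq_C] BDN[OF Yq'_C] by (metis add_right_cancel)
    have a: "A (Yq P) n = A (Yq' P) n" unfolding Suc ASuc
      by (rule sum.cong) (auto simp: IA IB)
    have "E (Yq' P) n = (\<Sum>k\<le>m. (case k of 0 \<Rightarrow> 0 | Suc j \<Rightarrow> \<Sum>i\<le>j. A (Yq P) i * B (Yq P) (j-i)) * D (Yq P) P (m-k))"
      unfolding Suc E_Yq' Z'_eq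
    proof (rule sum.cong[OF refl])
      fix k assume k: "k \<in> {..m}"
      have c: "(case k of 0 \<Rightarrow> 0 | Suc j \<Rightarrow> \<Sum>i\<le>j. A (Yq' P) i * B (Yq' P) (j-i))
          = (case k of 0 \<Rightarrow> 0 | Suc j \<Rightarrow> \<Sum>i\<le>j. A (Yq P) i * B (Yq P) (j-i))"
      proof (cases k)
        case (Suc j)
        have "(\<Sum>i\<le>j. A (Yq' P) i * B (Yq' P) (j-i)) = (\<Sum>i\<le>j. A (Yq P) i * B (Yq P) (j-i))"
        proof (rule sum.cong[OF refl])
          fix i assume "i \<in> {..j}"
          then have "i \<le> m" "j - i \<le> m" using k Suc by auto
          then show "A (Yq' P) i * B (Yq' P) (j-i) = A (Yq P) i * B (Yq P) (j-i)" by (simp add: IA IB)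
        qed
        then show ?thesis using Suc by simp
      qed simp
      have "D (Yq' P) P (m-k) = D (Yq P) P (m-k)" by (rule ID) simp
      then show "(case k of 0 \<Rightarrow> 0 | Suc j \<Rightarrow> \<Sum>i\<le>j. A (Yq' P) i * B (Yq' P) (j-i)) * D (Yq' P) P (m-k)
          = (case k of 0 \<Rightarrow> 0 | Suc j \<Rightarrow> \<Sum>i\<le>j. A (Yq P) i * B (Yq P) (j-i)) * D (Yq P) P (m-k)"
        using c by simp
    qed
    also have "\<dots> = E (Yq P) n"
      unfolding Suc E_Yq Zq_eq by (rule conv_swap[symmetric])
    finally have "E (Yq P) n = E (Yq' P) n" by simp
    then show ?thesis using a ABE[of "Yq P" n] ABE[of "Yq' P" n] by simp
  qed
qed

theorem lemma21:
  fixes P :: pat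
  shows "wilf_equiv
     (PNode NoChild (Cont (PNode (Cont (PNode NoChild (NonCont P))) NoChild)))
     (PNode NoChild (Cont (PNode (Cont (PNode NoChild NoChild)) (NonCont P))))"
proof -
  have "avoiders n (PNode NoChild (Cont (PNode (Cont (PNode NoChild (NonCont P))) NoChild)))
     = {t. size t = n \<and> av (Yq P) t}" for n
    unfolding avoiders_def using avoid_Q by blast
  moreover have "avoiders n (PNode NoChild (Cont (PNode (Cont (PNode NoChild NoChild)) (NonCont P))))
     = {t. size t = n \<and> av (Yq' P) t}" for n
    unfolding avoiders_def using avoid_Q' by blast
  ultimately show ?thesis unfolding wilf_equiv_def
    using main[of P] by (simp add: A_def cnt_def)
qed

end
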